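(* Let $q$ be a prime power, $m\ge1$, $s\ge1$ and $0\le d<sq$. Let $S=\{\mathbf{j}\in\mathbb{N}^m: |\mathbf{j}|<s\}$ and for $\mathbf{j}\in S$ let $d_{\mathbf{j}}=\min(m(q-1),d-|\mathbf{j}|q)$. Fix an enumeration $\mathbb{F}_q=\{\alpha_0,\dots,\alpha_{q-1}\}$ and for an integer $e$ put $$\mathcal{I}_e=\{(\alpha_{i_1},\dots,\alpha_{i_m}) : 0\le i_l\le q-1 \ (1\le l\le m),\ \textstyle\sum_{l} i_l\le e\}\subset\mathbb{F}_q^m$$ (empty if $e<0$). Then $$\mathcal{I}=\{(\mathbf{j},\mathbf{P}) : \mathbf{j}\in S,\ \mathbf{P}\in\mathcal{I}_{d_{\mathbf{j}}}\}\subset S\times\mathbb{F}_q^m$$ is an information set of the multiplicity code $\mathrm{Mult}^s_d$, i.e. the map $\mathrm{Mult}^s_d\to\mathbb{F}_q^{\mathcal{I}}$, $c\mapsto (c_{\mathbf{j},\mathbf{P}})_{(\mathbf{j},\mathbf{P})\in\mathcal{I}}$, is a bijection. In particular $|\mathcal{I}|=\binom{m+d}{m}$.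
   Context: For $F\in\mathbb{F}_q[X_1,\dots,X_m]$ and $\mathbf{i}\in\mathbb{N}^m$, the Hasse derivative $H(F,\mathbf{i})$ is the coefficient of $\mathbf{Z}^{\mathbf{i}}$ in $F(\mathbf{X}+\mathbf{Z})\in\mathbb{F}_q[\mathbf{X},\mathbf{Z}]$. The multiplicity code $\mathrm{Mult}^s_d$ is the set of all words $c=(c_{\mathbf{j},\mathbf{P}})_{\mathbf{j}\in S,\ \mathbf{P}\in\mathbb{F}_q^m}$ with $c_{\mathbf{j},\mathbf{P}}=H(F,\mathbf{j})(\mathbf{P})$, as $F$ ranges over polynomials in $\mathbb{F}_q[X_1,\dots,X_m]$ of total degree at most $d$; it is an $\mathbb{F}_q$-linear space. $|\mathbf{j}|$ denotes the sum of the coordinates of $\mathbf{j}$. *)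

theory Defs
  imports Main "HOL-Library.FuncSet" "HOL-Library.Cardinality"
begin

(* Multi-indices in N^m are nat lists of length m; points of F_q^m are 'a lists of length m. *)

definition degmonos :: "nat \<Rightarrow> nat \<Rightarrow> nat list set" where
  "degmonos m d = {a. length a = m \<and> sum_list a \<le> d}"

(* A polynomial of total degree \<le> d in m variables, given by its coefficient function
   (coefficient of X^a), vanishing outside the monomials of degree \<le> d. *)
definition polys :: "nat \<Rightarrow> nat \<Rightarrow> (nat list \<Rightarrow> 'a::field) set" where
  "polys m d = {c. \<forall>a. a \<notin> degmonos m d \<longrightarrow> c a = 0}"

(* Hasse derivative H(F,j) evaluated at P: coefficient of Z^j in F(X+Z), evaluated at X=P.
   For F = sum_a c_a X^a this is sum_a c_a prod_l binom(a_l,j_l) P_l^(a_l-j_l). *)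
definition hasse :: "nat \<Rightarrow> nat \<Rightarrow> (nat list \<Rightarrow> 'a::field) \<Rightarrow> nat list \<Rightarrow> 'a list \<Rightarrow> 'a" where
  "hasse m d c j P = (\<Sum>a\<in>degmonos m d. c a *
      (\<Prod>l<m. of_nat ((a ! l) choose (j ! l)) * (P ! l) ^ ((a ! l) - (j ! l))))"

definition Sidx :: "nat \<Rightarrow> nat \<Rightarrow> nat list set" where
  "Sidx m s = {j. length j = m \<and> sum_list j < s}"

definition points :: "nat \<Rightarrow> ('a::finite) list set" where
  "points m = {P. length P = m}"

definition codeword :: "nat \<Rightarrow> nat \<Rightarrow> nat \<Rightarrow> (nat list \<Rightarrow> 'a::{finite,field})
    \<Rightarrow> (nat list \<times> 'a list) \<Rightarrow> 'a" where
  "codeword m s d c = (\<lambda>(j, P). if j \<in> Sidx m s \<and> P \<in> points m then hasse m d c j P else 0)"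

definition multcode :: "nat \<Rightarrow> nat \<Rightarrow> nat \<Rightarrow> ((nat list \<times> 'a list) \<Rightarrow> 'a::{finite,field}) set" where
  "multcode m s d = codeword m s d ` polys m d"

definition dj :: "nat \<Rightarrow> nat \<Rightarrow> nat \<Rightarrow> nat list \<Rightarrow> int" where
  "dj q m d j = min (int (m * (q - 1))) (int d - int (sum_list j) * int q)"

definition Iset :: "nat \<Rightarrow> nat \<Rightarrow> (nat \<Rightarrow> 'a) \<Rightarrow> int \<Rightarrow> 'a list set" where
  "Iset q m \<alpha> e = {map \<alpha> is | is. length is = m \<and> (\<forall>i\<in>set is. i \<le> q - 1) \<and> int (sum_list is) \<le> e}"

definition infoset :: "nat \<Rightarrow> nat \<Rightarrow> nat \<Rightarrow> nat \<Rightarrow> (nat \<Rightarrow> 'a) \<Rightarrow> (nat list \<times> 'a list) set" where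
  "infoset q m s d \<alpha> = {(j, P). j \<in> Sidx m s \<and> P \<in> Iset q m \<alpha> (dj q m d j)}"

end

theory Submission
  imports Defs "HOL-Computational_Algebra.Polynomial"
begin

lemma pcompose_power: "pcompose (p ^ n) r = pcompose p r ^ n"
  by (induct n) (simp_all add: pcompose_mult pcompose_1)

lemma coeff_pcompose_lin:
  fixes p :: "'a::comm_ring_1 poly"
  assumes "degree p \<le> N"
  shows "coeff (pcompose p [:x,1:]) k = (\<Sum>n\<le>N. coeff p n * of_nat (n choose k) * x ^ (n - k))"
proof -
  have "pcompose p [:x,1:] = (\<Sum>n\<le>N. smult (coeff p n) ([:x,1:] ^ n))"
    apply (subst poly_as_sum_of_monoms'[OF assms, symmetric])
    by (simp add: pcompose_sum monom_altdef pcompose_smult pcompose_power pcompose_pCons)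
  hence "coeff (pcompose p [:x,1:]) k = (\<Sum>n\<le>N. coeff p n * coeff ([:x,1:] ^ n) k)"
    by (simp add: coeff_sum)
  also have "\<dots> = (\<Sum>n\<le>N. coeff p n * of_nat (n choose k) * x ^ (n - k))"
  proof (rule sum.cong[OF refl])
    fix n assume "n \<in> {..N}"
    show "coeff p n * coeff ([:x,1:] ^ n) k = coeff p n * of_nat (n choose k) * x ^ (n - k)"
    proof (cases "k \<le> n")
      case True thus ?thesis by (simp add: coeff_linear_poly_power)
    next
      case False
      have "degree ([:x,1:] ^ n) \<le> n" using degree_power_le[of "[:x,1:]" n] by simp
      hence "coeff ([:x,1:] ^ n) k = 0" using False by (intro coeff_eq_0) simp
      thus ?thesis using False by (simp add: binomial_eq_0)
    qed
  qed
  finally show ?thesis .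
qed

definition Vp :: "'a::{finite,field} poly" where
  "Vp = (\<Prod>g\<in>UNIV. [:-g,1:])"

definition Gp :: "(nat \<Rightarrow> 'a::field) \<Rightarrow> nat \<Rightarrow> 'a poly" where
  "Gp \<alpha> r = (\<Prod>t<r. [:-\<alpha> t,1:])"

definition Bu :: "(nat \<Rightarrow> 'a::{finite,field}) \<Rightarrow> nat \<Rightarrow> 'a poly" where
  "Bu \<alpha> k = Vp ^ (k div CARD('a)) * Gp \<alpha> (k mod CARD('a))"

lemma degree_Vp: "degree (Vp :: 'a::{finite,field} poly) \<le> CARD('a)"
  unfolding Vp_def using degree_prod_sum_le[of UNIV "\<lambda>g::'a. [:-g,1:]"] by simp

lemma degree_Gp: "degree (Gp \<alpha> r) \<le> r"
  unfolding Gp_def using degree_prod_sum_le[of "{..<r}" "\<lambda>t. [:-\<alpha> t,1:]"] by simp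

lemma degree_Bu: "degree (Bu (\<alpha>::nat \<Rightarrow> 'a::{finite,field}) k) \<le> k"
proof -
  have "degree (Bu \<alpha> k) \<le> degree (Vp::'a poly) * (k div CARD('a)) + (k mod CARD('a))"
    unfolding Bu_def using degree_mult_le degree_power_le degree_Gp
    by (meson add_mono order_trans)
  also have "\<dots> \<le> CARD('a) * (k div CARD('a)) + (k mod CARD('a))"
  proof -
    have "degree (Vp::'a poly) * (k div CARD('a)) \<le> CARD('a) * (k div CARD('a))"
      by (rule mult_le_mono1[OF degree_Vp])
    thus ?thesis by linarith
  qed
  also have "\<dots> = k" by simp
  finally show ?thesis .
qed

lemma poly0: "coeff p 0 = poly p 0"
  by (simp add: poly_0_coeff_0)

definition Wp :: "'a::{finite,field} \<Rightarrow> 'a poly" where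
  "Wp b = (\<Prod>g\<in>UNIV-{b}. [:b-g,1:])"

lemma Wp0: "coeff (Wp b) 0 \<noteq> 0"
  unfolding Wp_def poly0 poly_prod by simp

lemma Vp_comp: "pcompose Vp [:b,1:] = [:0,1:] * Wp b"
proof -
  have "pcompose Vp [:b,1:] = (\<Prod>g\<in>UNIV. [:b-g,1:])"
    unfolding Vp_def pcompose_prod by (simp add: pcompose_pCons)
  also have "\<dots> = [:b-b,1:] * Wp b" unfolding Wp_def
    by (subst prod.remove[of UNIV b]) auto
  finally show ?thesis by simp
qed

lemma Gp_comp: "coeff (pcompose (Gp \<alpha> r) [:b,1:]) 0 = (\<Prod>t<r. b - \<alpha> t)"
  unfolding Gp_def pcompose_prod poly0 poly_prod by (simp add: pcompose_pCons)

lemma Bu_comp: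
  "coeff (pcompose (Bu (\<alpha>::nat \<Rightarrow> 'a::{finite,field}) k) [:b,1:]) J =
    (if J < k div CARD('a) then 0
     else coeff (Wp b ^ (k div CARD('a)) * pcompose (Gp \<alpha> (k mod CARD('a))) [:b,1:]) (J - k div CARD('a)))"
proof -
  have "pcompose (Bu \<alpha> k) [:b,1:] = monom 1 (k div CARD('a)) *
     (Wp b ^ (k div CARD('a)) * pcompose (Gp \<alpha> (k mod CARD('a))) [:b,1:])"
    unfolding Bu_def pcompose_mult pcompose_power Vp_comp power_mult_distrib monom_altdef smult_1_left
    by (metis mult.assoc)
  thus ?thesis by (simp add: coeff_monom_mult)
qed

lemma Bu_diag:
  "coeff (pcompose (Bu (\<alpha>::nat \<Rightarrow> 'a::{finite,field}) k) [:b,1:]) (k div CARD('a)) =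
    coeff (Wp b) 0 ^ (k div CARD('a)) * (\<Prod>t<k mod CARD('a). b - \<alpha> t)"
  by (simp add: Bu_comp coeff_mult_0 coeff_0_power Gp_comp Gp_def poly_prod del: pcompose_pCons_0)

lemma tri1:
  fixes \<alpha> :: "nat \<Rightarrow> 'a::{finite,field}"
  assumes "coeff (pcompose (Bu \<alpha> K) [:\<alpha> (K' mod CARD('a)),1:]) (K' div CARD('a)) \<noteq> 0"
  shows "K \<le> K'"
proof -
  let ?q = "CARD('a)"
  have q: "?q > 0" by simp
  from assms have ge: "\<not> K' div ?q < K div ?q" by (auto simp: Bu_comp)
  show ?thesis
  proof (cases "K' div ?q = K div ?q")
    case True
    with assms have "(\<Prod>t<K mod ?q. \<alpha> (K' mod ?q) - \<alpha> t) \<noteq> 0"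
      using Bu_diag[of \<alpha> K "\<alpha> (K' mod ?q)"] by auto
    hence "\<not> K' mod ?q < K mod ?q" by auto
    hence "K mod ?q \<le> K' mod ?q" by simp
    moreover have "K = K div ?q * ?q + K mod ?q" by simp
    moreover have "K' = K div ?q * ?q + K' mod ?q" using True div_mult_mod_eq[of K' ?q] by simp
    ultimately show ?thesis by linarith
  next
    case False
    hence "K div ?q + 1 \<le> K' div ?q" using ge by simp
    hence "?q * (K div ?q) + ?q \<le> ?q * (K' div ?q)" using mult_le_mono2[of "K div ?q + 1" "K' div ?q" ?q] by simp
    moreover have "K mod ?q < ?q" using q by simp
    moreover have "K = ?q * (K div ?q) + K mod ?q" by simp
    moreover have "?q * (K' div ?q) \<le> K'" by (metis div_mult_mod_eq le_add1 mult.commute)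
    ultimately show ?thesis by linarith
  qed
qed

lemma tri2:
  fixes \<alpha> :: "nat \<Rightarrow> 'a::{finite,field}"
  assumes "inj_on \<alpha> {0..<CARD('a)}"
  shows "coeff (pcompose (Bu \<alpha> K) [:\<alpha> (K mod CARD('a)),1:]) (K div CARD('a)) \<noteq> 0"
proof -
  let ?q = "CARD('a)"
  have q: "?q > 0" by simp
  have "(\<Prod>t<K mod ?q. \<alpha> (K mod ?q) - \<alpha> t) \<noteq> 0"
  proof
    assume "(\<Prod>t<K mod ?q. \<alpha> (K mod ?q) - \<alpha> t) = 0"
    then obtain t where t: "t < K mod ?q" "\<alpha> (K mod ?q) = \<alpha> t" by auto
    have "K mod ?q < ?q" using q by simp
    with t have "K mod ?q = t" using inj_onD[OF assms t(2)] by (simp add: less_trans[OF t(1)])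
    with t show False by simp
  qed
  thus ?thesis by (metis Bu_diag Wp0 mult_eq_0_iff power_not_zero)
qed

lemma sum_list_le_comp:
  "length a = length b \<Longrightarrow> (\<forall>l<length a. a!l \<le> b!l) \<Longrightarrow> sum_list a \<le> sum_list (b::nat list)"
proof (induction a b rule: list_induct2)
  case (Cons x xs y ys)
  have "x \<le> y" using Cons.prems by (metis length_Cons nth_Cons_0 zero_less_Suc)
  moreover have "\<forall>l<length xs. xs!l \<le> ys!l" using Cons.prems by auto
  ultimately show ?case using Cons.IH by simp
qed simp

lemma sum_list_less_comp:
  "length a = length b \<Longrightarrow> (\<forall>l<length a. a!l \<le> b!l) \<Longrightarrow> a \<noteq> b \<Longrightarrow> sum_list a < sum_list (b::nat list)"
proof (induction a b rule: list_induct2)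
  case (Cons x xs y ys)
  have xy: "x \<le> y" using Cons.prems by (metis length_Cons nth_Cons_0 zero_less_Suc)
  moreover have c: "\<forall>l<length xs. xs!l \<le> ys!l" using Cons.prems by auto
  show ?case
  proof (cases "xs = ys")
    case True thus ?thesis using Cons.prems xy by auto
  next
    case False thus ?thesis using Cons.IH c xy by simp
  qed
qed simp

lemma box_sum:
  fixes u :: "nat \<Rightarrow> nat" and f :: "nat \<Rightarrow> nat \<Rightarrow> 'a::comm_semiring_1"
  shows "(\<Sum>b\<in>{b. length b = n \<and> (\<forall>l<n. b!l \<le> u l)}. \<Prod>l<n. f l (b!l)) = (\<Prod>l<n. \<Sum>k\<le>u l. (f l k :: 'a::comm_semiring_1))"
proof (induction n)
  case 0
  have "{b::nat list. length b = 0 \<and> (\<forall>l<0. b!l \<le> u l)} = {[]}" by auto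
  thus ?case by simp
next
  case (Suc n)
  let ?B = "\<lambda>n. {b::nat list. length b = n \<and> (\<forall>l<n. b!l \<le> u l)}"
  have eq: "?B (Suc n) = (\<lambda>(b,k). b@[k]) ` (?B n \<times> {..u n})"
  proof (intro set_eqI iffI)
    fix b assume b: "b \<in> ?B (Suc n)"
    then obtain c k where bc: "b = c @ [k]" by (metis (mono_tags, lifting) length_Suc_conv_rev mem_Collect_eq)
    have lc: "length c = n" using b bc by simp
    have c1: "\<forall>l<n. c!l \<le> u l"
    proof (intro allI impI)
      fix l assume "l < n"
      hence "b!l \<le> u l" using b by simp
      moreover have "b!l = c!l" using bc lc \<open>l < n\<close> by (simp add: nth_append)
      ultimately show "c!l \<le> u l" by simp
    qed
    have "b!n = k" using bc lc by (metis nth_append_length)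
    hence k: "k \<le> u n" using b by (metis (no_types, lifting) lessI mem_Collect_eq)
    have "(c,k) \<in> ?B n \<times> {..u n}" using lc c1 k by simp
    thus "b \<in> (\<lambda>(b,k). b@[k]) ` (?B n \<times> {..u n})" using bc by (simp add: image_iff)
  next
    fix b assume "b \<in> (\<lambda>(b,k). b@[k]) ` (?B n \<times> {..u n})"
    then obtain c k where bc: "b = c@[k]" "length c = n" "\<forall>l<n. c!l \<le> u l" "k \<le> u n" by auto
    have "\<forall>l<Suc n. b!l \<le> u l"
    proof (intro allI impI)
      fix l assume "l < Suc n"
      show "b!l \<le> u l"
      proof (cases "l < n")
        case True thus ?thesis using bc by (simp add: nth_append)
      next
        case False hence "l = n" using \<open>l < Suc n\<close> by simp
        thus ?thesis using bc by (simp add: nth_append)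
      qed
    qed
    thus "b \<in> ?B (Suc n)" using bc by simp
  qed
  have inj: "inj_on (\<lambda>(b,k). b@[k]) (?B n \<times> {..u n})"
    by (auto simp: inj_on_def)
  have "(\<Sum>b\<in>?B (Suc n). \<Prod>l<Suc n. f l (b!l)) =
        (\<Sum>(c,k)\<in>?B n \<times> {..u n}. \<Prod>l<Suc n. f l ((c@[k])!l))"
    unfolding eq by (subst sum.reindex[OF inj]) (simp add: case_prod_unfold)
  also have "\<dots> = (\<Sum>(c,k)\<in>?B n \<times> {..u n}. (\<Prod>l<n. f l (c!l)) * f n k)"
  proof (rule sum.cong[OF refl])
    fix x assume x: "x \<in> ?B n \<times> {..u n}"
    obtain c k where ck: "x = (c,k)" by fastforce
    have lc: "length c = n" using x ck by simp
    have "(\<Prod>l<n. f l ((c@[k])!l)) = (\<Prod>l<n. f l (c!l))"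
      by (rule prod.cong) (simp_all add: nth_append lc)
    moreover have "(c@[k])!n = k" using lc by (metis nth_append_length)
    ultimately show "(case x of (c,k) \<Rightarrow> \<Prod>l<Suc n. f l ((c@[k])!l)) = (case x of (c,k) \<Rightarrow> (\<Prod>l<n. f l (c!l)) * f n k)"
      using ck by simp
  qed
  also have "\<dots> = (\<Sum>c\<in>?B n. \<Sum>k\<le>u n. (\<Prod>l<n. f l (c!l)) * f n k)"
    by (rule sum.cartesian_product[symmetric])
  also have "\<dots> = (\<Sum>c\<in>?B n. \<Prod>l<n. f l (c!l)) * (\<Sum>k\<le>u n. f n k)"
    by (simp add: sum_product)
  also have "\<dots> = (\<Prod>l<Suc n. \<Sum>k\<le>u l. f l k)" using Suc.IH by simp
  finally show ?case .
qed

definition coeffB :: "(nat \<Rightarrow> 'a::{finite,field}) \<Rightarrow> nat \<Rightarrow> nat list \<Rightarrow> nat list \<Rightarrow> 'a" where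
  "coeffB \<alpha> m a b = (if length b = m then \<Prod>l<m. coeff (Bu \<alpha> (a!l)) (b!l) else 0)"

lemma coeffB_zero:
  assumes "length a = m" "coeffB \<alpha> m a b \<noteq> 0"
  shows "length b = m \<and> (\<forall>l<m. b!l \<le> a!l)"
proof -
  have lb: "length b = m" using assms unfolding coeffB_def by (auto split: if_splits)
  have "\<forall>l<m. b!l \<le> a!l"
  proof (intro allI impI, rule ccontr)
    fix l assume l: "l < m" "\<not> b!l \<le> a!l"
    hence "coeff (Bu \<alpha> (a!l)) (b!l) = 0"
      using degree_Bu[of \<alpha> "a!l"] by (intro coeff_eq_0) simp
    hence "coeffB \<alpha> m a b = 0" unfolding coeffB_def using l lb by auto
    thus False using assms by simp
  qed
  thus ?thesis using lb by simp
qed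

lemma hasse_coeffB:
  fixes \<alpha> :: "nat \<Rightarrow> 'a::{finite,field}"
  assumes a: "a \<in> degmonos m d" and j: "length j = m" and P: "length P = m"
  shows "hasse m d (coeffB \<alpha> m a) j P = (\<Prod>l<m. coeff (pcompose (Bu \<alpha> (a!l)) [:P!l,1:]) (j!l))"
proof -
  let ?B = "{b::nat list. length b = m \<and> (\<forall>l<m. b!l \<le> a!l)}"
  let ?f = "\<lambda>l k. coeff (Bu \<alpha> (a!l)) k * (of_nat (k choose (j!l)) * (P!l) ^ (k - j!l))"
  have la: "length a = m" "sum_list a \<le> d" using a by (auto simp: degmonos_def)
  have sub: "?B \<subseteq> degmonos m d"
  proof
    fix b assume "b \<in> ?B"
    hence "length b = m" "sum_list b \<le> sum_list a" using sum_list_le_comp[of b a] la by auto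
    thus "b \<in> degmonos m d" using la by (simp add: degmonos_def)
  qed
  have fin: "finite (degmonos m d)"
  proof -
    have "degmonos m d \<subseteq> {xs. set xs \<subseteq> {..d} \<and> length xs = m}"
    proof
      fix xs assume "xs \<in> degmonos m d"
      hence "length xs = m" "sum_list xs \<le> d" by (auto simp: degmonos_def)
      moreover have "\<forall>x\<in>set xs. x \<le> sum_list xs" using member_le_sum_list by blast
      ultimately show "xs \<in> {xs. set xs \<subseteq> {..d} \<and> length xs = m}" by auto
    qed
    thus ?thesis by (rule finite_subset) (simp add: finite_lists_length_eq)
  qed
  have "hasse m d (coeffB \<alpha> m a) j P = (\<Sum>b\<in>degmonos m d. \<Prod>l<m. ?f l (b!l))"
    unfolding hasse_def
    by (rule sum.cong[OF refl]) (auto simp: coeffB_def degmonos_def prod.distrib)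
  also have "\<dots> = (\<Sum>b\<in>?B. \<Prod>l<m. ?f l (b!l))"
  proof (rule sum.mono_neutral_right[OF fin sub], rule ballI)
    fix b assume b: "b \<in> degmonos m d - ?B"
    then obtain l where l: "l < m" "\<not> b!l \<le> a!l" by (auto simp: degmonos_def)
    hence "coeff (Bu \<alpha> (a!l)) (b!l) = 0"
      using degree_Bu[of \<alpha> "a!l"] by (intro coeff_eq_0) simp
    thus "(\<Prod>l<m. ?f l (b!l)) = 0" using l by (intro prod_zero) auto
  qed
  also have "\<dots> = (\<Prod>l<m. \<Sum>k\<le>a!l. ?f l k)" by (rule box_sum)
  also have "\<dots> = (\<Prod>l<m. coeff (pcompose (Bu \<alpha> (a!l)) [:P!l,1:]) (j!l))"
    by (rule prod.cong[OF refl], subst coeff_pcompose_lin[OF degree_Bu]) (simp add: mult.assoc)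
  finally show ?thesis .
qed

lemma finite_degmonos: "finite (degmonos m d)"
proof -
  have "degmonos m d \<subseteq> {xs. set xs \<subseteq> {..d} \<and> length xs = m}"
  proof
    fix xs assume "xs \<in> degmonos m d"
    hence "length xs = m" "sum_list xs \<le> d" by (auto simp: degmonos_def)
    moreover have "\<forall>x\<in>set xs. x \<le> sum_list xs" using member_le_sum_list by blast
    ultimately show "xs \<in> {xs. set xs \<subseteq> {..d} \<and> length xs = m}" by auto
  qed
  thus ?thesis by (rule finite_subset) (simp add: finite_lists_length_eq)
qed

lemma card_degmonos: "m \<ge> 1 \<Longrightarrow> card (degmonos m d) = (m + d) choose m"
proof -
  assume m: "m \<ge> 1"
  have eq: "degmonos m d = (\<Union>N\<in>{..d}. {l::nat list. length l = m \<and> sum_list l = N})"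
    by (auto simp: degmonos_def)
  have "card (degmonos m d) = (\<Sum>N\<le>d. card {l::nat list. length l = m \<and> sum_list l = N})"
    unfolding eq
  proof (rule card_UN_disjoint)
    show "finite {..d}" by simp
    show "\<forall>i\<in>{..d}. finite {l::nat list. length l = m \<and> sum_list l = i}"
    proof
      fix i assume "i \<in> {..d}"
      hence "{l::nat list. length l = m \<and> sum_list l = i} \<subseteq> degmonos m d" by (auto simp: degmonos_def)
      thus "finite {l::nat list. length l = m \<and> sum_list l = i}" using finite_degmonos finite_subset by blast
    qed
  qed auto
  also have "\<dots> = (\<Sum>N\<le>d. (m - 1 + N) choose N)"
    using m by (intro sum.cong refl) (simp add: card_length_sum_list add.commute)
  also have "\<dots> = Suc (m - 1 + d) choose d" by (rule sum_choose_lower)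
  also have "\<dots> = (m + d) choose d" using m by simp
  also have "\<dots> = (m + d) choose m" using binomial_symmetric[of d "m+d"] by simp
  finally show ?thesis .
qed

lemma sum_divmod:
  "sum_list (a::nat list) = q * sum_list (map (\<lambda>x. x div q) a) + sum_list (map (\<lambda>x. x mod q) a)"
proof (induction a)
  case (Cons x a)
  have "x = q * (x div q) + x mod q" by simp
  thus ?case using Cons.IH by (simp add: algebra_simps)
qed simp

lemma sum_list_bound: "(\<forall>x\<in>set xs. x \<le> B) \<Longrightarrow> sum_list (xs::nat list) \<le> length xs * B"
  by (induction xs) auto

lemma hasse_lin:
  "finite A \<Longrightarrow> hasse m d (\<lambda>b. \<Sum>a\<in>A. c a * F a b) j P = (\<Sum>a\<in>A. c a * hasse m d (F a) j P)"
  unfolding hasse_def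
  by (simp add: sum_distrib_left sum_distrib_right mult.assoc) (rule sum.swap)

lemma tri_inj:
  fixes E :: "'b \<Rightarrow> 'b \<Rightarrow> 'a::field" and \<mu> :: "'b \<Rightarrow> nat"
  assumes fin: "finite A"
    and off: "\<forall>a\<in>A. \<forall>b\<in>A. E a b \<noteq> 0 \<longrightarrow> b = a \<or> \<mu> b < \<mu> a"
    and diag: "\<forall>a\<in>A. E a a \<noteq> 0"
    and z: "\<forall>a\<in>A. (\<Sum>b\<in>A. g b * E a b) = 0"
  shows "\<forall>a\<in>A. g a = 0"
proof (rule ccontr)
  assume "\<not> (\<forall>a\<in>A. g a = 0)"
  then obtain a1 where "a1 \<in> A \<and> g a1 \<noteq> 0" by blast
  then obtain a0 where a0: "a0 \<in> A \<and> g a0 \<noteq> 0" and mn: "\<forall>y. y \<in> A \<and> g y \<noteq> 0 \<longrightarrow> \<mu> a0 \<le> \<mu> y"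
    using ex_has_least_nat[of "\<lambda>x. x \<in> A \<and> g x \<noteq> 0" a1 \<mu>] by blast
  have "(\<Sum>b\<in>A. g b * E a0 b) = g a0 * E a0 a0 + (\<Sum>b\<in>A-{a0}. g b * E a0 b)"
    using a0 fin by (meson sum.remove)
  also have "(\<Sum>b\<in>A-{a0}. g b * E a0 b) = 0"
  proof (rule sum.neutral, rule ballI)
    fix b assume b: "b \<in> A - {a0}"
    show "g b * E a0 b = 0"
    proof (rule ccontr)
      assume "g b * E a0 b \<noteq> 0"
      hence "g b \<noteq> 0" "E a0 b \<noteq> 0" by auto
      with off a0 b have "\<mu> b < \<mu> a0" by auto
      with mn b \<open>g b \<noteq> 0\<close> show False by force
    qed
  qed
  finally have "(\<Sum>b\<in>A. g b * E a0 b) = g a0 * E a0 a0" by simp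
  moreover have "g a0 * E a0 a0 \<noteq> 0" using a0 diag by simp
  ultimately show False using z a0 by simp
qed

theorem mainTheorem6:
  fixes \<alpha> :: "nat \<Rightarrow> 'a::{finite,field}"
    and m s d :: nat
  assumes "m \<ge> 1" and "s \<ge> 1" and "d < s * CARD('a)"
    and "bij_betw \<alpha> {0..<CARD('a)} (UNIV :: 'a set)"
  shows "bij_betw (\<lambda>w. restrict w (infoset CARD('a) m s d \<alpha>)) (multcode m s d)
           (infoset CARD('a) m s d \<alpha> \<rightarrow>\<^sub>E (UNIV :: 'a set))
         \<and> card (infoset CARD('a) m s d \<alpha>) = (m + d) choose m"
proof -
  let ?q = "CARD('a)"
  have q0: "?q > 0" by simp
  define A where "A = degmonos m d"
  define I where "I = infoset ?q m s d \<alpha>"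
  define \<phi> where "\<phi> = (\<lambda>a. (map (\<lambda>x. x div ?q) a, map \<alpha> (map (\<lambda>x. x mod ?q) a)))"
  have inj\<alpha>: "inj_on \<alpha> {0..<?q}" using assms(4) by (simp add: bij_betw_def)
  have finA: "finite A" unfolding A_def by (rule finite_degmonos)
  have memI: "(j, P) \<in> I \<longleftrightarrow> length j = m \<and> sum_list j < s \<and>
      (\<exists>is. P = map \<alpha> is \<and> length is = m \<and> (\<forall>i\<in>set is. i \<le> ?q - 1) \<and>
         int (sum_list is) \<le> dj ?q m d j)" for j P
    unfolding I_def infoset_def Iset_def Sidx_def by auto
  have phiI: "\<phi> a \<in> I" if a: "a \<in> A" for a
  proof -
    let ?j = "map (\<lambda>x. x div ?q) a" and ?is = "map (\<lambda>x. x mod ?q) a"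
    have la: "length a = m" "sum_list a \<le> d" using a by (auto simp: A_def degmonos_def)
    have sd: "sum_list a = ?q * sum_list ?j + sum_list ?is" by (rule sum_divmod)
    have "?q * sum_list ?j \<le> d" using sd la by linarith
    moreover have "d < ?q * s" using assms(3) by (simp add: mult.commute)
    ultimately have "?q * sum_list ?j < ?q * s" by linarith
    hence sj: "sum_list ?j < s" by simp
    have b1: "\<forall>i\<in>set ?is. i \<le> ?q - 1"
    proof
      fix i assume "i \<in> set ?is"
      then obtain x where "i = x mod ?q" by auto
      moreover have "x mod ?q < ?q" using q0 by simp
      ultimately show "i \<le> ?q - 1" by linarith
    qed
    hence "sum_list ?is \<le> length ?is * (?q - 1)" by (rule sum_list_bound)
    hence "sum_list ?is \<le> m * (?q - 1)" using la by simp
    hence i1: "int (sum_list ?is) \<le> int (m * (?q - 1))" by (simp only: of_nat_le_iff)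
    have "sum_list ?is + sum_list ?j * ?q \<le> d" using sd la by (simp add: mult.commute)
    hence "int (sum_list ?is + sum_list ?j * ?q) \<le> int d" by (simp only: of_nat_le_iff)
    hence i2: "int (sum_list ?is) \<le> int d - int (sum_list ?j) * int ?q" by simp
    have "int (sum_list ?is) \<le> dj ?q m d ?j" using i1 i2 by (simp add: dj_def)
    hence "length ?j = m \<and> sum_list ?j < s \<and> (map \<alpha> ?is = map \<alpha> ?is \<and> length ?is = m \<and>
       (\<forall>i\<in>set ?is. i \<le> ?q - 1) \<and> int (sum_list ?is) \<le> dj ?q m d ?j)"
      using la sj b1 by simp
    thus ?thesis unfolding \<phi>_def memI by blast
  qed
  have phiinj: "inj_on \<phi> A"
  proof (rule inj_onI)
    fix a b assume a: "a \<in> A" and b: "b \<in> A" and e: "\<phi> a = \<phi> b"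
    have l: "length a = m" "length b = m" using a b by (auto simp: A_def degmonos_def)
    have e1: "map (\<lambda>x. x div ?q) a = map (\<lambda>x. x div ?q) b" using e by (simp add: \<phi>_def)
    have "inj_on \<alpha> (set (map (\<lambda>x. x mod ?q) a) \<union> set (map (\<lambda>x. x mod ?q) b))"
      by (rule inj_on_subset[OF inj\<alpha>]) auto
    moreover have "map \<alpha> (map (\<lambda>x. x mod ?q) a) = map \<alpha> (map (\<lambda>x. x mod ?q) b)"
      using e unfolding \<phi>_def by (simp only: prod.inject)
    ultimately have e2: "map (\<lambda>x. x mod ?q) a = map (\<lambda>x. x mod ?q) b"
      using inj_on_map_eq_map by blast
    show "a = b"
    proof (rule nth_equalityI)
      show "length a = length b" using l by simp
      fix i assume i: "i < length a"
      have "a!i div ?q = b!i div ?q" using e1 i l by (metis nth_map)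
      moreover have "a!i mod ?q = b!i mod ?q" using e2 i l by (metis nth_map)
      ultimately show "a!i = b!i" by (metis div_mult_mod_eq)
    qed
  qed
  have phisurj: "I \<subseteq> \<phi> ` A"
  proof
    fix x assume "x \<in> I"
    then obtain j P where x: "x = (j, P)" and "(j,P) \<in> I" by (cases x) auto
    then obtain ix where lj: "length j = m" and sj: "sum_list j < s" and P: "P = map \<alpha> ix"
      and lis: "length ix = m" and bis: "\<forall>i\<in>set ix. i \<le> ?q - 1"
      and dis: "int (sum_list ix) \<le> dj ?q m d j" unfolding memI by blast
    define a where "a = map (\<lambda>(x,y). ?q * x + y) (zip j ix)"
    have la: "length a = m" using lj lis by (simp add: a_def)
    have an: "a!i = ?q * j!i + ix!i" if "i < m" for i using that lj lis by (simp add: a_def)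
    have isq: "ix!i < ?q" if "i < m" for i
    proof -
      have "ix!i \<le> ?q - 1" using bis that lis by simp
      thus ?thesis using q0 by linarith
    qed
    have ej: "map (\<lambda>x. x div ?q) a = j"
      by (rule nth_equalityI) (simp_all add: la lj an isq)
    have eis: "map (\<lambda>x. x mod ?q) a = ix"
      by (rule nth_equalityI) (simp_all add: la lis an isq)
    have "sum_list a = ?q * sum_list j + sum_list ix" using sum_divmod[of a ?q] ej eis by simp
    moreover have "int (sum_list ix) \<le> int d - int (sum_list j) * int ?q" using dis by (simp add: dj_def)
    ultimately have "int (?q * sum_list j + sum_list ix) \<le> int d"
      by (simp only: of_nat_add of_nat_mult mult.commute)
    hence "?q * sum_list j + sum_list ix \<le> d" by (simp only: of_nat_le_iff)
    hence "sum_list a \<le> d" using \<open>sum_list a = ?q * sum_list j + sum_list ix\<close> by simp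
    hence "a \<in> A" using la by (simp add: A_def degmonos_def)
    moreover have "\<phi> a = x" unfolding \<phi>_def using x P by (simp only: ej eis)
    ultimately show "x \<in> \<phi> ` A" by blast
  qed
  have Ieq: "I = \<phi> ` A" using phisurj phiI by blast
  have cardI: "card I = card A" using Ieq card_image[OF phiinj] by simp
  have cardA: "card A = (m + d) choose m" unfolding A_def using assms(1) by (rule card_degmonos)
  have finI: "finite I" using Ieq finA by simp
  define E where "E = (\<lambda>a' a. hasse m d (coeffB \<alpha> m a) (fst (\<phi> a')) (snd (\<phi> a')))"
  define f where "f = (\<lambda>K' K. coeff (pcompose (Bu \<alpha> K) [:\<alpha> (K' mod ?q),1:]) (K' div ?q))"
  have Eprod: "E a' a = (\<Prod>l<m. f (a'!l) (a!l))" if "a' \<in> A" "a \<in> A" for a' a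
  proof -
    have l: "length a' = m" using that by (simp add: A_def degmonos_def)
    have "E a' a = (\<Prod>l<m. coeff (pcompose (Bu \<alpha> (a!l)) [:(map \<alpha> (map (\<lambda>x. x mod ?q) a'))!l,1:])
                        ((map (\<lambda>x. x div ?q) a')!l))"
      unfolding E_def \<phi>_def using that l by (simp add: hasse_coeffB A_def)
    also have "\<dots> = (\<Prod>l<m. f (a'!l) (a!l))" using l by (intro prod.cong refl) (simp add: f_def)
    finally show ?thesis .
  qed
  have off: "\<forall>a'\<in>A. \<forall>a\<in>A. E a' a \<noteq> 0 \<longrightarrow> a = a' \<or> sum_list a < sum_list a'"
  proof (intro ballI impI)
    fix a' a assume a': "a' \<in> A" and a: "a \<in> A" and ne: "E a' a \<noteq> 0"
    have l: "length a' = m" "length a = m" using a a' by (auto simp: A_def degmonos_def)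
    have "\<forall>l<m. a!l \<le> a'!l"
    proof (intro allI impI)
      fix l assume "l < m"
      hence "f (a'!l) (a!l) \<noteq> 0" using ne Eprod[OF a' a] by auto
      thus "a!l \<le> a'!l" unfolding f_def by (rule tri1)
    qed
    thus "a = a' \<or> sum_list a < sum_list a'" using sum_list_less_comp[of a a'] l by auto
  qed
  have diag: "\<forall>a\<in>A. E a a \<noteq> 0"
  proof
    fix a assume a: "a \<in> A"
    have "\<forall>l<m. f (a!l) (a!l) \<noteq> 0" unfolding f_def using tri2[OF inj\<alpha>] by blast
    thus "E a a \<noteq> 0" using Eprod[OF a a] by simp
  qed
  define combo where "combo = (\<lambda>c b. \<Sum>a\<in>A. c a * coeffB \<alpha> m a b)"
  have combo_polys: "combo c \<in> polys m d" for c
    unfolding polys_def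
  proof (intro CollectI allI impI)
    fix b assume b: "b \<notin> degmonos m d"
    have "coeffB \<alpha> m a b = 0" if a: "a \<in> A" for a
    proof (rule ccontr)
      assume "coeffB \<alpha> m a b \<noteq> 0"
      moreover have la: "length a = m" "sum_list a \<le> d" using a by (auto simp: A_def degmonos_def)
      ultimately have "length b = m \<and> (\<forall>l<m. b!l \<le> a!l)" using coeffB_zero by blast
      hence "length b = m" "sum_list b \<le> sum_list a" using sum_list_le_comp[of b a] la by auto
      thus False using b la by (simp add: degmonos_def)
    qed
    thus "combo c b = 0" by (simp add: combo_def)
  qed
  have cw: "codeword m s d F x = hasse m d F (fst x) (snd x)" if "x \<in> I" for F x
  proof -
    obtain j P where x: "x = (j,P)" by (cases x)
    from that[unfolded x memI] have "j \<in> Sidx m s" "P \<in> points m"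
      by (auto simp: Sidx_def points_def)
    thus ?thesis by (simp add: x codeword_def)
  qed
  define \<Phi> where "\<Phi> = (\<lambda>c. restrict (codeword m s d (combo c)) I)"
  have \<Phi>inj: "inj_on \<Phi> (A \<rightarrow>\<^sub>E (UNIV :: 'a set))"
  proof (rule inj_onI)
    fix c c' assume c: "c \<in> A \<rightarrow>\<^sub>E (UNIV :: 'a set)" and c': "c' \<in> A \<rightarrow>\<^sub>E (UNIV :: 'a set)"
      and e: "\<Phi> c = \<Phi> c'"
    have "\<forall>a'\<in>A. (\<Sum>a\<in>A. (c a - c' a) * E a' a) = 0"
    proof
      fix a' assume a': "a' \<in> A"
      have pI: "\<phi> a' \<in> I" using phiI[OF a'] .
      have "\<Phi> c (\<phi> a') = \<Phi> c' (\<phi> a')" using e by simp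
      hence "codeword m s d (combo c) (\<phi> a') = codeword m s d (combo c') (\<phi> a')"
        using pI by (simp add: \<Phi>_def)
      hence "(\<Sum>a\<in>A. c a * E a' a) = (\<Sum>a\<in>A. c' a * E a' a)"
        unfolding cw[OF pI] combo_def E_def hasse_lin[OF finA] .
      thus "(\<Sum>a\<in>A. (c a - c' a) * E a' a) = 0"
        by (simp add: left_diff_distrib sum_subtractf)
    qed
    hence "\<forall>a\<in>A. c a - c' a = 0"
      by (rule tri_inj[OF finA off diag])
    thus "c = c'" using c c' by (intro PiE_ext) auto
  qed
  have cardP: "card (A \<rightarrow>\<^sub>E (UNIV :: 'a set)) = card (I \<rightarrow>\<^sub>E (UNIV :: 'a set))"
    using finA finI cardI by (simp add: card_PiE)
  have finPI: "finite (I \<rightarrow>\<^sub>E (UNIV :: 'a set))" using finI by (simp add: finite_PiE)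
  have \<Phi>sub: "\<Phi> ` (A \<rightarrow>\<^sub>E UNIV) \<subseteq> I \<rightarrow>\<^sub>E (UNIV :: 'a set)"
    unfolding \<Phi>_def by auto
  have \<Phi>img: "\<Phi> ` (A \<rightarrow>\<^sub>E UNIV) = I \<rightarrow>\<^sub>E (UNIV :: 'a set)"
    by (rule card_subset_eq[OF finPI \<Phi>sub]) (simp add: card_image[OF \<Phi>inj] cardP)
  let ?R = "\<lambda>w. restrict w I"
  have Rimg: "?R ` multcode m s d = I \<rightarrow>\<^sub>E (UNIV :: 'a set)"
  proof
    show "?R ` multcode m s d \<subseteq> I \<rightarrow>\<^sub>E UNIV" by auto
    show "I \<rightarrow>\<^sub>E UNIV \<subseteq> ?R ` multcode m s d"
    proof
      fix t assume "t \<in> I \<rightarrow>\<^sub>E (UNIV :: 'a set)"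
      hence "t \<in> \<Phi> ` (A \<rightarrow>\<^sub>E UNIV)" using \<Phi>img by simp
      then obtain c where "c \<in> A \<rightarrow>\<^sub>E UNIV" "t = \<Phi> c" by (rule imageE) simp
      moreover have "codeword m s d (combo c) \<in> multcode m s d"
        unfolding multcode_def using combo_polys by blast
      ultimately show "t \<in> ?R ` multcode m s d" unfolding \<Phi>_def
        by (intro image_eqI[where x="codeword m s d (combo c)"]) simp_all
    qed
  qed
  define extd where "extd = (\<lambda>g::nat list \<Rightarrow> 'a. \<lambda>b. if b \<in> A then g b else 0)"
  have polsub: "polys m d \<subseteq> extd ` (A \<rightarrow>\<^sub>E UNIV)"
  proof
    fix c :: "nat list \<Rightarrow> 'a" assume c: "c \<in> polys m d"
    have "c = extd (restrict c A)"
    proof (rule ext)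
      fix b show "c b = extd (restrict c A) b" using c by (simp add: extd_def polys_def A_def)
    qed
    moreover have "restrict c A \<in> A \<rightarrow>\<^sub>E UNIV" by simp
    ultimately show "c \<in> extd ` (A \<rightarrow>\<^sub>E UNIV)" by (rule image_eqI)
  qed
  have finPA: "finite (A \<rightarrow>\<^sub>E (UNIV :: 'a set))" using finA by (simp add: finite_PiE)
  have finpol: "finite (polys m d :: (nat list \<Rightarrow> 'a) set)"
    using polsub finPA finite_subset by blast
  have "card (polys m d :: (nat list \<Rightarrow> 'a) set) \<le> card (A \<rightarrow>\<^sub>E (UNIV :: 'a set))"
    using card_mono[OF _ polsub] card_image_le[OF finPA, of extd] finPA by simp
  moreover have "card (multcode m s d :: ((nat list \<times> 'a list) \<Rightarrow> 'a) set) \<le> card (polys m d :: (nat list \<Rightarrow> 'a) set)"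
    unfolding multcode_def using card_image_le[OF finpol] .
  ultimately have cm: "card (multcode m s d :: ((nat list \<times> 'a list) \<Rightarrow> 'a) set) \<le> card (I \<rightarrow>\<^sub>E (UNIV :: 'a set))"
    using cardP by simp
  have finM: "finite (multcode m s d :: ((nat list \<times> 'a list) \<Rightarrow> 'a) set)"
    unfolding multcode_def using finpol by simp
  have "card (?R ` multcode m s d) = card (multcode m s d :: ((nat list \<times> 'a list) \<Rightarrow> 'a) set)"
    using card_image_le[OF finM, of ?R] cm Rimg by simp
  hence injR: "inj_on ?R (multcode m s d :: ((nat list \<times> 'a list) \<Rightarrow> 'a) set)"
    by (rule eq_card_imp_inj_on[OF finM])
  show ?thesis
    using injR Rimg cardI cardA unfolding bij_betw_def I_def by simp
qed

end
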